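(* Let $p>1$ and $\gamma=\frac{p-2}{2(p-1)}$. For $\alpha>0$, let $\phi$ be the maximal solution, on $[0,R_{\max})$ with $R_{\max}=R_{\max}(\alpha)\in(0,\infty]$, of $$\phi''=\tfrac12 y\phi'-\gamma\phi-|\phi'|^p\ (y>0),\qquad \phi(0)=0,\quad \phi'(0)=\alpha.$$ There exists $\alpha_0>0$ such that for every $\alpha\in(0,\alpha_0)$: $R_{\max}=\infty$, $\phi>0$ and $\phi'>0$ on $(0,\infty)$, and there exists $\bar R>0$ such that $\phi''<0$ on $[0,\bar R)$ and $\phi''>0$ on $(\bar R,\infty)$. *)

theory Defs
  imports "HOL-Analysis.Analysis"
begin

definition Ivl :: "ereal \<Rightarrow> real set" where
  "Ivl R = {y. 0 \<le> y \<and> ereal y < R}"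

definition gam :: "real \<Rightarrow> real" where
  "gam p = (p - 2) / (2 * (p - 1))"

definition is_sol :: "real \<Rightarrow> real \<Rightarrow> ereal \<Rightarrow> (real \<Rightarrow> real) \<Rightarrow> (real \<Rightarrow> real) \<Rightarrow> (real \<Rightarrow> real) \<Rightarrow> bool" where
  "is_sol p \<alpha> R phi d1 d2 \<longleftrightarrow> 0 < R \<and>
     (\<forall>y\<in>Ivl R. (phi has_real_derivative d1 y) (at y within Ivl R)
               \<and> (d1 has_real_derivative d2 y) (at y within Ivl R)) \<and>
     (\<forall>y\<in>Ivl R. 0 < y \<longrightarrow> d2 y = y / 2 * d1 y - gam p * phi y - \<bar>d1 y\<bar> powr p) \<and>
     phi 0 = 0 \<and> d1 0 = \<alpha>"

definition is_max_sol :: "real \<Rightarrow> real \<Rightarrow> ereal \<Rightarrow> (real \<Rightarrow> real) \<Rightarrow> (real \<Rightarrow> real) \<Rightarrow> (real \<Rightarrow> real) \<Rightarrow> bool" where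
  "is_max_sol p \<alpha> R phi d1 d2 \<longleftrightarrow> is_sol p \<alpha> R phi d1 d2 \<and>
     \<not> (\<exists>S psi e1 e2. R < S \<and> is_sol p \<alpha> S psi e1 e2 \<and> (\<forall>y\<in>Ivl R. psi y = phi y))"

end

theory Submission
  imports Defs
begin


lemma Ivl_cases:
  assumes "0 < R"
  shows "Ivl R = {0..} \<or> (\<exists>r>0. Ivl R = {0..<r})"
proof (cases R)
  case (real r)
  then show ?thesis using assms by (auto simp: Ivl_def)
next
  case PInf
  then show ?thesis by (auto simp: Ivl_def)
next
  case MInf
  then show ?thesis using assms by auto
qed

lemma Ivl_0: "0 < R \<Longrightarrow> 0 \<in> Ivl R"
  by (auto simp: Ivl_def zero_ereal_def)

lemma Ivl_nonneg: "y \<in> Ivl R \<Longrightarrow> 0 \<le> y"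
  by (auto simp: Ivl_def)

lemma Ivl_down: "y \<in> Ivl R \<Longrightarrow> 0 \<le> x \<Longrightarrow> x \<le> y \<Longrightarrow> x \<in> Ivl R"
  by (auto simp: Ivl_def) (meson ereal_less_eq(3) order.strict_trans1)

lemma Ivl_interior:
  assumes "0 < R" "y \<in> Ivl R" "0 < y"
  shows "y \<in> interior (Ivl R)"
proof -
  from Ivl_cases[OF assms(1)] consider "Ivl R = {0..}" | r where "r>0" "Ivl R = {0..<r}" by blast
  then show ?thesis
  proof cases
    case 1
    have "{0<..} \<subseteq> interior {0::real..}" by (rule interior_maximal) auto
    then show ?thesis using assms 1 by auto
  next
    case 2
    then show ?thesis using assms by simp
  qed
qed

lemma at_Ivl:
  assumes "0 < R" "y \<in> Ivl R" "0 < y"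
  shows "at y within Ivl R = at y"
  using at_within_interior[OF Ivl_interior[OF assms]] .

lemma Ivl_sub: "y \<in> Ivl R \<Longrightarrow> {0..y} \<subseteq> Ivl R"
  using Ivl_down by auto

lemma first_zero:
  fixes u :: "real \<Rightarrow> real"
  assumes aS: "a \<in> S" and lb: "\<And>y. y \<in> S \<Longrightarrow> a \<le> y"
    and down: "\<And>y t. y \<in> S \<Longrightarrow> a \<le> t \<Longrightarrow> t \<le> y \<Longrightarrow> t \<in> S"
    and cont: "continuous_on S u" and ua: "u a > 0"
    and nz: "\<And>z. z \<in> S \<Longrightarrow> a < z \<Longrightarrow> u z = 0 \<Longrightarrow> (\<And>t. a \<le> t \<Longrightarrow> t < z \<Longrightarrow> u t > 0) \<Longrightarrow> False"
  shows "\<And>y. y \<in> S \<Longrightarrow> u y > 0"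
proof (rule ccontr)
  fix y assume yS: "y \<in> S" and "\<not> u y > 0"
  hence uy: "u y \<le> 0" by simp
  have sub: "{a..y} \<subseteq> S" using down yS by auto
  have ay: "a \<le> y" using lb yS by auto
  have c: "continuous_on {a..y} u" using cont sub continuous_on_subset by blast
  define Z where "Z = {a..y} \<inter> u -` {0}"
  have "closed Z" unfolding Z_def by (rule continuous_closed_preimage[OF c]) auto
  moreover obtain x where "a \<le> x" "x \<le> y" "u x = 0" using IVT2'[of u y 0 a, OF uy _ ay c] ua by auto
  hence "Z \<noteq> {}" unfolding Z_def by auto
  moreover have "bdd_below Z" unfolding Z_def by auto
  ultimately have IZ: "Inf Z \<in> Z" using closed_contains_Inf by blast
  define z where "z = Inf Z"
  have zZ: "z \<in> Z" using IZ z_def by simp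
  have za: "a < z" using zZ ua unfolding Z_def by (cases "z = a") auto
  have "u t > 0" if tt: "a \<le> t" "t < z" for t
  proof (rule ccontr)
    assume "\<not> u t > 0"
    hence "u t \<le> 0" by simp
    have "{a..t} \<subseteq> {a..y}" using tt zZ unfolding Z_def by auto
    hence ct: "continuous_on {a..t} u" using c continuous_on_subset by blast
    obtain x where x: "a \<le> x" "x \<le> t" "u x = 0" using IVT2'[of u t 0 a, OF \<open>u t \<le> 0\<close> _ tt(1) ct] ua by auto
    hence "x \<in> Z" using tt zZ unfolding Z_def by auto
    hence "z \<le> x" unfolding z_def using \<open>bdd_below Z\<close> by (simp add: cInf_lower)
    thus False using x tt by simp
  qed
  moreover have "z \<in> S" "u z = 0" using zZ sub unfolding Z_def by auto
  ultimately show False using nz za by blast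
qed



definition W :: "real \<Rightarrow> (real \<Rightarrow> real) \<Rightarrow> (real \<Rightarrow> real) \<Rightarrow> real \<Rightarrow> real" where
  "W p phi d1 y = y / 2 * d1 y - gam p * phi y - \<bar>d1 y\<bar> powr p"

lemma sol_facts:
  assumes "is_sol p \<alpha> R phi d1 d2"
  shows sol_R: "0 < R" and sol_phi0: "phi 0 = 0" and sol_d10: "d1 0 = \<alpha>"
    and sol_dphi: "\<And>y. y \<in> Ivl R \<Longrightarrow> 0 < y \<Longrightarrow> (phi has_real_derivative d1 y) (at y)"
    and sol_dd1: "\<And>y. y \<in> Ivl R \<Longrightarrow> 0 < y \<Longrightarrow> (d1 has_real_derivative d2 y) (at y)"
    and sol_dphiw: "\<And>y. y \<in> Ivl R \<Longrightarrow> (phi has_real_derivative d1 y) (at y within Ivl R)"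
    and sol_dd1w: "\<And>y. y \<in> Ivl R \<Longrightarrow> (d1 has_real_derivative d2 y) (at y within Ivl R)"
    and sol_cphi: "continuous_on (Ivl R) phi" and sol_cd1: "continuous_on (Ivl R) d1"
    and sol_eq: "\<And>y. y \<in> Ivl R \<Longrightarrow> 0 < y \<Longrightarrow> d2 y = W p phi d1 y"
proof -
  show R: "0 < R" and "phi 0 = 0" "d1 0 = \<alpha>" using assms by (auto simp: is_sol_def)
  show dw: "\<And>y. y \<in> Ivl R \<Longrightarrow> (phi has_real_derivative d1 y) (at y within Ivl R)"
    and dw2: "\<And>y. y \<in> Ivl R \<Longrightarrow> (d1 has_real_derivative d2 y) (at y within Ivl R)"
    using assms by (auto simp: is_sol_def)
  show "\<And>y. y \<in> Ivl R \<Longrightarrow> 0 < y \<Longrightarrow> (phi has_real_derivative d1 y) (at y)"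
    using dw at_Ivl[OF R] by metis
  show "\<And>y. y \<in> Ivl R \<Longrightarrow> 0 < y \<Longrightarrow> (d1 has_real_derivative d2 y) (at y)"
    using dw2 at_Ivl[OF R] by metis
  show "continuous_on (Ivl R) phi" using dw by (rule DERIV_continuous_on)
  show "continuous_on (Ivl R) d1" using dw2 by (rule DERIV_continuous_on)
  show "\<And>y. y \<in> Ivl R \<Longrightarrow> 0 < y \<Longrightarrow> d2 y = W p phi d1 y"
    using assms by (auto simp: is_sol_def W_def)
qed

lemma sol_mvt_phi:
  assumes "is_sol p \<alpha> R phi d1 d2" "0 \<le> a" "a < b" "b \<in> Ivl R"
  shows "\<exists>x. a < x \<and> x < b \<and> phi b - phi a = (b - a) * d1 x"
proof -
  have c: "continuous_on {a..b} phi"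
    using sol_cphi[OF assms(1)] Ivl_sub[OF assms(4)] assms(2) continuous_on_subset
    by (metis atLeastatMost_subset_iff order.refl subset_trans)
  have "\<exists>l z. a < z \<and> z < b \<and> DERIV phi z :> l \<and> phi b - phi a = (b - a) * l"
    apply (rule MVT[OF assms(3) c])
    using sol_dphi[OF assms(1)] Ivl_down[OF assms(4)] assms real_differentiable_def
    by (metis less_eq_real_def order_le_less_trans)
  then obtain l z where "a < z" "z < b" "DERIV phi z :> l" "phi b - phi a = (b - a) * l" by blast
  moreover have "DERIV phi z :> d1 z"
    using sol_dphi[OF assms(1)] Ivl_down[OF assms(4)] \<open>a < z\<close> \<open>z < b\<close> assms(2) by simp
  ultimately show ?thesis using DERIV_unique by metis
qed

lemma sol_mvt_d1:
  assumes "is_sol p \<alpha> R phi d1 d2" "0 \<le> a" "a < b" "b \<in> Ivl R"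
  shows "\<exists>x. a < x \<and> x < b \<and> d1 b - d1 a = (b - a) * W p phi d1 x"
proof -
  have c: "continuous_on {a..b} d1"
    using sol_cd1[OF assms(1)] Ivl_sub[OF assms(4)] assms(2) continuous_on_subset
    by (metis atLeastatMost_subset_iff order.refl subset_trans)
  have "\<exists>l z. a < z \<and> z < b \<and> DERIV d1 z :> l \<and> d1 b - d1 a = (b - a) * l"
    apply (rule MVT[OF assms(3) c])
    using sol_dd1[OF assms(1)] Ivl_down[OF assms(4)] assms real_differentiable_def
    by (metis less_eq_real_def order_le_less_trans)
  then obtain l z where "a < z" "z < b" "DERIV d1 z :> l" "d1 b - d1 a = (b - a) * l" by blast
  moreover have "z \<in> Ivl R" using Ivl_down[OF assms(4)] \<open>a < z\<close> \<open>z < b\<close> assms(2) by simp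
  moreover have "DERIV d1 z :> d2 z"
    using sol_dd1[OF assms(1)] calculation \<open>a < z\<close> assms(2) by simp
  ultimately show ?thesis using DERIV_unique sol_eq[OF assms(1)] assms(2)
    by (metis less_eq_real_def order_le_less_trans)
qed

lemma powr_lip_pos:
  fixes s t M p :: real
  assumes "1 \<le> p" "0 \<le> t" "t < s" "s \<le> M"
  shows "\<bar>s powr p - t powr p\<bar> \<le> p * M powr (p - 1) * \<bar>s - t\<bar>"
proof -
  have c: "continuous_on {t..s} (\<lambda>x. x powr p)"
    by (rule continuous_on_powr') (use assms in \<open>auto intro: continuous_intros\<close>)
  have d: "DERIV (\<lambda>x. x powr p) x :> p * x powr (p - 1)" if "t < x" for x
    using DERIV_fun_powr[OF DERIV_ident, of x p] that assms by simp
  obtain l z where z: "t < z" "z < s" "DERIV (\<lambda>x. x powr p) z :> l" "s powr p - t powr p = (s - t) * l"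
    using MVT[OF assms(3) c] d real_differentiable_def by (metis less_trans)
  have l: "l = p * z powr (p - 1)" using DERIV_unique z(3) d z(1) by blast
  have "z powr (p - 1) \<le> M powr (p - 1)" using powr_mono2[of "p-1" z M] z assms by simp
  hence "0 \<le> l" "l \<le> p * M powr (p - 1)" using l assms by (auto intro: mult_left_mono)
  thus ?thesis using z assms by (simp add: abs_mult mult.commute mult_right_mono)
qed

lemma powr_lip:
  fixes s t M p :: real
  assumes "1 \<le> p" "0 \<le> t" "0 \<le> s" "s \<le> M" "t \<le> M"
  shows "\<bar>s powr p - t powr p\<bar> \<le> p * M powr (p - 1) * \<bar>s - t\<bar>"
  using powr_lip_pos[of p t s M] powr_lip_pos[of p s t M] assms
  by (cases "t < s"; cases "s < t") (auto simp: abs_minus_commute)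

lemma abs_powr_lip:
  fixes a b M p :: real
  assumes "1 \<le> p" "\<bar>a\<bar> \<le> M" "\<bar>b\<bar> \<le> M"
  shows "\<bar>\<bar>a\<bar> powr p - \<bar>b\<bar> powr p\<bar> \<le> p * M powr (p - 1) * \<bar>a - b\<bar>"
proof -
  have "\<bar>\<bar>a\<bar> powr p - \<bar>b\<bar> powr p\<bar> \<le> p * M powr (p - 1) * \<bar>\<bar>a\<bar> - \<bar>b\<bar>\<bar>"
    using powr_lip[of p "\<bar>b\<bar>" "\<bar>a\<bar>" M] assms by simp
  also have "\<dots> \<le> p * M powr (p - 1) * \<bar>a - b\<bar>"
    using assms by (intro mult_left_mono) auto
  finally show ?thesis .
qed

lemma min_powr_lip:
  fixes a b M p :: real
  assumes "1 \<le> p" "0 \<le> M"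
  shows "\<bar>min \<bar>a\<bar> M powr p - min \<bar>b\<bar> M powr p\<bar> \<le> p * M powr (p - 1) * \<bar>a - b\<bar>"
proof -
  have "\<bar>min \<bar>a\<bar> M powr p - min \<bar>b\<bar> M powr p\<bar> \<le> p * M powr (p - 1) * \<bar>min \<bar>a\<bar> M - min \<bar>b\<bar> M\<bar>"
    using powr_lip[of p "min \<bar>b\<bar> M" "min \<bar>a\<bar> M" M] assms by simp
  also have "\<dots> \<le> p * M powr (p - 1) * \<bar>a - b\<bar>"
    using assms by (intro mult_left_mono) (auto simp: min_def)
  finally show ?thesis .
qed



lemma bounded_on_compact:
  fixes f :: "real \<Rightarrow> real"
  assumes "continuous_on {a..b} f"
  obtains M where "M \<ge> 0" "\<And>t. t \<in> {a..b} \<Longrightarrow> \<bar>f t\<bar> \<le> M"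
proof -
  have "compact (f ` {a..b})" using compact_continuous_image[OF assms] by simp
  then obtain B where "\<forall>x\<in>f ` {a..b}. norm x \<le> B" using compact_imp_bounded bounded_iff by metis
  hence "\<And>t. t \<in> {a..b} \<Longrightarrow> \<bar>f t\<bar> \<le> max B 0" by force
  thus ?thesis using that[of "max B 0"] by simp
qed

lemma energy_ineq:
  fixes u v g x y gm L C :: real
  assumes "0 \<le> x" "x \<le> y" "\<bar>g\<bar> \<le> L * \<bar>v\<bar>" "0 \<le> L" "C = 1 + y + \<bar>gm\<bar> + 2 * L"
  shows "2 * u * v + 2 * v * (x / 2 * v - gm * u - g) \<le> C * (u^2 + v^2)"
proof -
  have e0: "0 \<le> u^2 + v^2" by simp
  have 1: "2 * u * v \<le> u^2 + v^2" using sum_squares_bound[of u v] by (simp add: power2_eq_square)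
  have 2: "x * v^2 \<le> y * (u^2 + v^2)"
    using assms by (intro mult_mono) auto
  have 3: "- (2 * gm * u * v) \<le> \<bar>gm\<bar> * (u^2 + v^2)"
  proof -
    have "- (2 * gm * u * v) \<le> \<bar>- (2 * gm * u * v)\<bar>" by simp
    also have "\<dots> = \<bar>gm\<bar> * (2 * \<bar>u\<bar> * \<bar>v\<bar>)" by (simp add: abs_mult)
    also have "\<dots> \<le> \<bar>gm\<bar> * (u^2 + v^2)"
      using sum_squares_bound[of "\<bar>u\<bar>" "\<bar>v\<bar>"] by (intro mult_left_mono) (auto simp: power2_eq_square)
    finally show ?thesis .
  qed
  have 4: "- (2 * v * g) \<le> 2 * L * (u^2 + v^2)"
  proof -
    have "- (2 * v * g) \<le> \<bar>- (2 * v * g)\<bar>" by simp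
    also have "\<dots> = 2 * \<bar>v\<bar> * \<bar>g\<bar>" by (simp add: abs_mult)
    also have "\<dots> \<le> 2 * \<bar>v\<bar> * (L * \<bar>v\<bar>)" using assms by (intro mult_left_mono) auto
    also have "\<dots> = 2 * L * v^2" by (simp add: power2_eq_square)
    also have "\<dots> \<le> 2 * L * (u^2 + v^2)" using assms by (intro mult_left_mono) auto
    finally show ?thesis .
  qed
  have "2 * u * v + 2 * v * (x / 2 * v - gm * u - g) = 2 * u * v + x * v^2 - 2 * gm * u * v - 2 * v * g"
    by (simp add: algebra_simps power2_eq_square)
  also have "\<dots> \<le> (u^2 + v^2) + y * (u^2 + v^2) + \<bar>gm\<bar> * (u^2 + v^2) + 2 * L * (u^2 + v^2)"
    using 1 2 3 4 by linarith
  also have "\<dots> = C * (u^2 + v^2)" using assms by (simp add: algebra_simps)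
  finally show ?thesis .
qed

lemma sol_unique:
  assumes p: "p > 1" and s1: "is_sol p \<alpha> R1 phi1 a1 b1" and s2: "is_sol p \<alpha> R2 phi2 a2 b2"
    and y1: "y \<in> Ivl R1" and y2: "y \<in> Ivl R2"
  shows "phi1 y = phi2 y \<and> a1 y = a2 y"
proof (cases "y = 0")
  case True
  then show ?thesis using sol_facts[OF s1] sol_facts[OF s2] by simp
next
  case False
  hence ypos: "0 < y" using Ivl_nonneg[OF y1] by simp
  have sub1: "{0..y} \<subseteq> Ivl R1" and sub2: "{0..y} \<subseteq> Ivl R2" using Ivl_sub y1 y2 by auto
  have ca1: "continuous_on {0..y} a1" using sol_cd1[OF s1] sub1 continuous_on_subset by blast
  have ca2: "continuous_on {0..y} a2" using sol_cd1[OF s2] sub2 continuous_on_subset by blast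
  have cp1: "continuous_on {0..y} phi1" using sol_cphi[OF s1] sub1 continuous_on_subset by blast
  have cp2: "continuous_on {0..y} phi2" using sol_cphi[OF s2] sub2 continuous_on_subset by blast
  obtain M1 where M1: "M1 \<ge> 0" "\<And>t. t \<in> {0..y} \<Longrightarrow> \<bar>a1 t\<bar> \<le> M1" using bounded_on_compact[OF ca1] by blast
  obtain M2 where M2: "M2 \<ge> 0" "\<And>t. t \<in> {0..y} \<Longrightarrow> \<bar>a2 t\<bar> \<le> M2" using bounded_on_compact[OF ca2] by blast
  define M where "M = max M1 M2"
  define L where "L = p * M powr (p - 1)"
  define C where "C = 1 + y + \<bar>gam p\<bar> + 2 * L"
  have L0: "0 \<le> L" unfolding L_def using p by simp
  define E where "E t = (phi1 t - phi2 t)^2 + (a1 t - a2 t)^2" for t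
  define F where "F t = exp (- C * t) * E t" for t
  have dF: "\<exists>d. DERIV F x :> d \<and> d \<le> 0" if x: "0 < x" "x < y" for x
  proof -
    have x1: "x \<in> Ivl R1" and x2: "x \<in> Ivl R2" using sub1 sub2 x by auto
    note d11 = sol_dphi[OF s1 x1 x(1)] and d12 = sol_dd1[OF s1 x1 x(1)]
    note d21 = sol_dphi[OF s2 x2 x(1)] and d22 = sol_dd1[OF s2 x2 x(1)]
    define u where "u = phi1 x - phi2 x"
    define v where "v = a1 x - a2 x"
    define g where "g = \<bar>a1 x\<bar> powr p - \<bar>a2 x\<bar> powr p"
    have Ed: "DERIV E x :> 2 * u * v + 2 * v * (b1 x - b2 x)"
      unfolding E_def u_def v_def
      by (rule derivative_eq_intros refl d11 d12 d21 d22)+ (simp add: algebra_simps)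
    have bdiff: "b1 x - b2 x = x / 2 * v - gam p * u - g"
    proof -
      have "b1 x - b2 x = (x/2*a1 x - gam p*phi1 x - \<bar>a1 x\<bar> powr p) - (x/2*a2 x - gam p*phi2 x - \<bar>a2 x\<bar> powr p)"
        using sol_eq[OF s1 x1 x(1)] sol_eq[OF s2 x2 x(1)] by (simp add: W_def)
      also have "\<dots> = x / 2 * v - gam p * u - g" unfolding u_def v_def g_def by (simp add: right_diff_distrib)
      finally show ?thesis .
    qed
    have gL: "\<bar>g\<bar> \<le> L * \<bar>v\<bar>"
    proof -
      have "\<bar>a1 x\<bar> \<le> M" "\<bar>a2 x\<bar> \<le> M" using M1(2)[of x] M2(2)[of x] x unfolding M_def by auto
      thus ?thesis using abs_powr_lip[of p "a1 x" M "a2 x"] p by (simp add: g_def L_def v_def)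
    qed
    have ineq: "2 * u * v + 2 * v * (b1 x - b2 x) \<le> C * E x"
      unfolding bdiff E_def u_def[symmetric] v_def[symmetric]
      by (rule energy_ineq[OF _ _ gL L0]) (use x in \<open>auto simp: C_def\<close>)
    have "DERIV F x :> (- C) * exp (- C * x) * E x + exp (- C * x) * (2 * u * v + 2 * v * (b1 x - b2 x))"
      unfolding F_def by (rule derivative_eq_intros refl Ed)+ simp
    moreover have "(- C) * exp (- C * x) * E x + exp (- C * x) * (2 * u * v + 2 * v * (b1 x - b2 x)) \<le> 0"
    proof -
      have "exp (- C * x) * (2 * u * v + 2 * v * (b1 x - b2 x)) \<le> exp (- C * x) * (C * E x)"
        using ineq by (intro mult_left_mono) auto
      thus ?thesis by (simp add: algebra_simps)
    qed
    ultimately show ?thesis by blast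
  qed
  have cF: "continuous_on {0..y} F" unfolding F_def E_def
    by (intro continuous_intros cp1 cp2 ca1 ca2)
  have "F y \<le> F 0" using DERIV_nonpos_imp_decreasing_open[of 0 y F] dF cF ypos by auto
  moreover have "F 0 = 0" unfolding F_def E_def using sol_facts[OF s1] sol_facts[OF s2] by simp
  ultimately have "E y \<le> 0" unfolding F_def by (simp add: mult_le_0_iff)
  hence "(phi1 y - phi2 y)^2 + (a1 y - a2 y)^2 = 0" unfolding E_def
    by (metis add_nonneg_nonneg order_antisym zero_le_power2)
  thus ?thesis by (simp add: sum_power2_eq_zero_iff)
qed



lemma exp_integral_bound:
  fixes K Lam c :: real
  assumes "0 < Lam" "0 \<le> c" "0 \<le> K"
  shows "integral {0..c} (\<lambda>s. K * exp (Lam * s)) = K * (exp (Lam * c) - 1) / Lam"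
proof -
  have "((\<lambda>s. K * exp (Lam * s)) has_integral (K * exp (Lam * c) / Lam - K * exp (Lam * 0) / Lam)) {0..c}"
  proof (rule fundamental_theorem_of_calculus[OF assms(2)])
    fix x assume "x \<in> {0..c}"
    have "((\<lambda>s. K * exp (Lam * s) / Lam) has_real_derivative K * exp (Lam * x)) (at x within {0..c})"
      by (rule derivative_eq_intros refl)+ (use assms in \<open>auto simp: field_simps\<close>)
    thus "((\<lambda>s. K * exp (Lam * s) / Lam) has_vector_derivative K * exp (Lam * x)) (at x within {0..c})"
      using assms by (simp add: has_real_derivative_iff_has_vector_derivative)
  qed
  hence "integral {0..c} (\<lambda>s. K * exp (Lam * s)) = K * exp (Lam * c) / Lam - K * exp (Lam * 0) / Lam"
    by (rule integral_unique)
  also have "\<dots> = K * (exp (Lam * c) - 1) / Lam" by (simp add: right_diff_distrib diff_divide_distrib)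
  finally show ?thesis .
qed

lemma ode_exists:
  fixes f :: "real \<Rightarrow> real \<times> real \<Rightarrow> real \<times> real" and x0 :: "real \<times> real"
  assumes T: "0 < T" and L: "0 < L"
    and lip: "\<And>s a b. s \<in> {0..T} \<Longrightarrow> norm (f s a - f s b) \<le> L * norm (a - b)"
    and cont: "\<And>w. continuous_on {0..T} w \<Longrightarrow> continuous_on {0..T} (\<lambda>s. f s (w s))"
  shows "\<exists>x. x 0 = x0 \<and> (\<forall>t\<in>{0..T}. (x has_vector_derivative f t (x t)) (at t within {0..T}))"
proof -
  define Lam where "Lam = 2 * L"
  have Lam: "0 < Lam" using L by (simp add: Lam_def)
  define h where "h z s = f s (exp (Lam * s) *\<^sub>R apply_bcontfun z s)" for z :: "real \<Rightarrow>\<^sub>C (real \<times> real)" and s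
  define G where "G z t = exp (- Lam * t) *\<^sub>R (x0 + integral {0..t} (h z))" for z t
  have hc: "continuous_on {0..T} (h z)" for z
    unfolding h_def by (rule cont) (intro continuous_intros continuous_on_apply_bcontfun)
  have hi: "h z integrable_on {0..c}" if "c \<in> {0..T}" for z c
    using hc[of z] that by (intro integrable_continuous_interval) (auto intro: continuous_on_subset)
  have Gc: "continuous_on (cbox 0 T) (G z)" for z
  proof -
    have "continuous_on {0..T} (\<lambda>t. integral {0..t} (h z))"
      by (rule indefinite_integral_continuous_1) (rule integrable_continuous_interval[OF hc])
    thus ?thesis unfolding G_def by (auto intro!: continuous_intros)
  qed
  define P where "P z g \<longleftrightarrow> (\<forall>x\<in>{0..T}. apply_bcontfun g x = G z x) \<and> (\<forall>x. apply_bcontfun g x = G z (clamp 0 T x))" for z g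
  have Pex: "\<exists>g. P z g" for z
  proof -
    obtain g :: "real \<Rightarrow>\<^sub>C (real \<times> real)" where g1: "\<And>x. x \<in> cbox 0 T \<Longrightarrow> g x = G z x" and g2: "\<And>x. g x = G z (clamp 0 T x)"
      using continuous_on_cbox_bcontfunE[OF Gc[of z]] by blast
    have "\<forall>x\<in>{0..T}. g x = G z x" using g1 by simp
    thus ?thesis unfolding P_def using g2 by blast
  qed
  define Phi where "Phi z = (SOME g. P z g)" for z
  have PPhi: "P z (Phi z)" for z unfolding Phi_def using Pex someI_ex by metis
  have clampI: "clamp 0 T x \<in> {0..T}" for x :: real
    using clamp_in_interval[of 0 T x] T by auto
  have contr: "dist (Phi z1) (Phi z2) \<le> 1/2 * dist z1 z2" for z1 z2
  proof (rule dist_bound)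
    fix x
    define c where "c = clamp 0 T x"
    have c: "c \<in> {0..T}" unfolding c_def by (rule clampI)
    define d where "d = dist z1 z2"
    have "dist (Phi z1 x) (Phi z2 x) = dist (G z1 c) (G z2 c)"
      using PPhi[of z1] PPhi[of z2] unfolding P_def c_def by simp
    also have "\<dots> = exp (- Lam * c) * norm (integral {0..c} (\<lambda>s. h z1 s - h z2 s))"
    proof -
      have "G z1 c - G z2 c = exp (- Lam * c) *\<^sub>R (integral {0..c} (h z1) - integral {0..c} (h z2))"
        unfolding G_def by (simp add: scaleR_right_diff_distrib scaleR_right_distrib)
      also have "\<dots> = exp (- Lam * c) *\<^sub>R integral {0..c} (\<lambda>s. h z1 s - h z2 s)"
        using integral_diff[OF hi[OF c] hi[OF c]] by simp
      finally show ?thesis by (simp add: dist_norm)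
    qed
    also have "\<dots> \<le> exp (- Lam * c) * integral {0..c} (\<lambda>s. L * d * exp (Lam * s))"
    proof (rule mult_left_mono)
      show "norm (integral {0..c} (\<lambda>s. h z1 s - h z2 s)) \<le> integral {0..c} (\<lambda>s. L * d * exp (Lam * s))"
      proof (rule integral_norm_bound_integral)
        show "(\<lambda>s. h z1 s - h z2 s) integrable_on {0..c}" using hi[OF c] by (intro integrable_diff)
        show "(\<lambda>s. L * d * exp (Lam * s)) integrable_on {0..c}"
          by (intro integrable_continuous_interval continuous_intros)
        fix s assume s: "s \<in> {0..c}"
        hence sT: "s \<in> {0..T}" using c by auto
        have "norm (h z1 s - h z2 s) \<le> L * norm (exp (Lam * s) *\<^sub>R z1 s - exp (Lam * s) *\<^sub>R z2 s)"
          unfolding h_def by (rule lip[OF sT])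
        also have "\<dots> = L * (exp (Lam * s) * dist (z1 s) (z2 s))"
          by (simp add: scaleR_right_diff_distrib[symmetric] dist_norm)
        also have "\<dots> \<le> L * (exp (Lam * s) * d)"
          unfolding d_def using L by (intro mult_left_mono dist_bounded) auto
        finally show "norm (h z1 s - h z2 s) \<le> L * d * exp (Lam * s)" by (simp add: ac_simps)
      qed
    qed simp
    also have "\<dots> = exp (- Lam * c) * (L * d * (exp (Lam * c) - 1) / Lam)"
      using exp_integral_bound[of Lam c "L * d"] Lam c L unfolding d_def by simp
    also have "\<dots> = L * d * (exp (- Lam * c) * exp (Lam * c) - exp (- Lam * c)) / Lam"
      by (simp add: algebra_simps)
    also have "\<dots> = L * d * (1 - exp (- Lam * c)) / Lam"
      by (simp add: exp_add[symmetric])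
    also have "\<dots> \<le> L * d / Lam"
    proof -
      have "0 \<le> L * d" unfolding d_def using L by simp
      hence "L * d * (1 - exp (- Lam * c)) \<le> L * d" by (simp add: mult_left_le)
      thus ?thesis using Lam by (intro divide_right_mono) auto
    qed
    also have "\<dots> = 1/2 * dist z1 z2" unfolding Lam_def d_def using L by simp
    finally show "dist (Phi z1 x) (Phi z2 x) \<le> 1/2 * dist z1 z2" .
  qed
  obtain z where z: "Phi z = z" using banach_fix_type[of "1/2" Phi] contr by auto
  define x where "x t = x0 + integral {0..t} (h z)" for t
  have xz: "exp (Lam * t) *\<^sub>R z t = x t" if "t \<in> {0..T}" for t
  proof -
    have "z t = G z t" using PPhi[of z] that unfolding z P_def by auto
    thus ?thesis unfolding G_def x_def by (simp add: exp_minus)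
  qed
  show ?thesis
  proof (intro exI conjI ballI)
    show "x 0 = x0" unfolding x_def by simp
    fix t assume t: "t \<in> {0..T}"
    have "((\<lambda>u. integral {0..u} (h z)) has_vector_derivative h z t) (at t within {0..T})"
      by (rule integral_has_vector_derivative[OF hc t])
    hence "(x has_vector_derivative h z t) (at t within {0..T})"
      unfolding x_def by (intro derivative_eq_intros) auto
    moreover have "h z t = f t (x t)" unfolding h_def using xz[OF t] by simp
    ultimately show "(x has_vector_derivative f t (x t)) (at t within {0..T})" by simp
  qed
qed



definition c0 :: "real \<Rightarrow> real" where "c0 p = 1/2 - max (gam p) 0"
definition K0 :: "real \<Rightarrow> real" where "K0 p = 4 * 2 powr p / c0 p"
definition D0 :: "real \<Rightarrow> real" where "D0 p = (K0 p)\<^sup>2 * (1 + 2 * \<bar>gam p\<bar>) + K0 p * 2 powr p"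
definition b0 :: "real \<Rightarrow> real" where "b0 p = min 1 (c0 p / (4 * (D0 p + 1)))"

lemma gam_lt: "p > 1 \<Longrightarrow> gam p < 1/2"
  unfolding gam_def by (simp add: divide_less_eq)

lemma c0_pos: "p > 1 \<Longrightarrow> 0 < c0 p" and c0_le: "c0 p \<le> 1/2"
  using gam_lt[of p] unfolding c0_def by auto

lemma K0_pos: "p > 1 \<Longrightarrow> 0 < K0 p"
  using c0_pos unfolding K0_def by simp

lemma D0_nonneg: "p > 1 \<Longrightarrow> 0 \<le> D0 p"
  using K0_pos[of p] unfolding D0_def by (simp add: add_nonneg_nonneg)

lemma b0_pos: "p > 1 \<Longrightarrow> 0 < b0 p"
  using c0_pos[of p] D0_nonneg[of p] unfolding b0_def by simp

lemma pow_bound: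
  fixes p \<alpha> s :: real
  assumes "p > 1" "0 < \<alpha>" "\<bar>s\<bar> \<le> 2 * \<alpha>"
  shows "\<bar>s\<bar> powr p \<le> 2 powr p * (\<alpha> * \<alpha> powr (p - 1))"
proof -
  have "\<bar>s\<bar> powr p \<le> (2 * \<alpha>) powr p" using assms by (intro powr_mono2) auto
  also have "\<dots> = 2 powr p * \<alpha> powr p" by (simp add: powr_mult)
  also have "\<alpha> powr p = \<alpha> * \<alpha> powr (p - 1)" using powr_mult_base[of \<alpha> "p - 1"] assms by simp
  finally show ?thesis .
qed

lemma phase1:
  assumes p: "p > 1" and sol: "is_sol p \<alpha> R phi d1 d2" and a: "0 < \<alpha>"
    and small: "\<alpha> powr (p - 1) < b0 p"
  shows "\<And>y. y \<in> Ivl R \<Longrightarrow> y \<le> K0 p * \<alpha> powr (p - 1) \<Longrightarrow> \<bar>d1 y - \<alpha>\<bar> < c0 p / 2 * \<alpha>"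
proof -
  define \<beta> where "\<beta> = \<alpha> powr (p - 1)"
  define K where "K = K0 p"
  define Y where "Y = K * \<beta>"
  define c where "c = c0 p"
  define g where "g = gam p"
  define P2 where "P2 = (2::real) powr p"
  define D where "D = D0 p"
  have b0: "\<beta> \<ge> 0" unfolding \<beta>_def by simp
  have bsmall: "\<beta> < b0 p" using small unfolding \<beta>_def .
  have c: "0 < c" "c \<le> 1/2" unfolding c_def using c0_pos[OF p] c0_le by auto
  have K: "0 < K" unfolding K_def using K0_pos[OF p] .
  have Y0: "0 \<le> Y" unfolding Y_def using K b0 by simp
  have D: "0 \<le> D" "D = K^2 * (1 + 2 * \<bar>g\<bar>) + K * P2" unfolding D_def K_def g_def P2_def D0_def
    using D0_nonneg[OF p] unfolding D0_def by auto
  have P2: "0 < P2" unfolding P2_def by simp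
  have bD: "\<beta> * (D + 1) < c / 4" and b1: "\<beta> < 1"
  proof -
    have "\<beta> < c / (4 * (D + 1))" using bsmall unfolding b0_def c_def D_def by simp
    hence "\<beta> * (4 * (D + 1)) < c" using D(1) by (simp add: pos_less_divide_eq del: mult_less_cancel_left_pos)
    thus "\<beta> * (D + 1) < c / 4" by (simp add: algebra_simps)
    show "\<beta> < 1" using bsmall unfolding b0_def by simp
  qed
  define S where "S = {y \<in> Ivl R. y \<le> Y}"
  define u where "u y = c / 2 * \<alpha> - \<bar>d1 y - \<alpha>\<bar>" for y
  have R: "0 < R" using sol_R[OF sol] .
  have main: "u y > 0" if "y \<in> S" for y
  proof (rule first_zero[of 0 S u])
    show "0 \<in> S" unfolding S_def using Ivl_0[OF R] Y0 by simp
    show "\<And>y. y \<in> S \<Longrightarrow> 0 \<le> y" unfolding S_def using Ivl_nonneg by auto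
    show "\<And>y t. y \<in> S \<Longrightarrow> 0 \<le> t \<Longrightarrow> t \<le> y \<Longrightarrow> t \<in> S" unfolding S_def using Ivl_down by auto
    show "continuous_on S u" unfolding u_def
      by (intro continuous_intros continuous_on_subset[OF sol_cd1[OF sol]]) (auto simp: S_def)
    show "0 < u 0" unfolding u_def using sol_d10[OF sol] c a by simp
    show "y \<in> S" by fact
  next
    fix z assume zS: "z \<in> S" and z0: "0 < z" and uz: "u z = 0" and before: "\<And>t. 0 \<le> t \<Longrightarrow> t < z \<Longrightarrow> 0 < u t"
    have zR: "z \<in> Ivl R" and zY: "z \<le> Y" using zS unfolding S_def by auto
    have ca: "c / 2 * \<alpha> \<le> 1 * \<alpha>" using c a by (intro mult_right_mono) auto
    have bnd: "\<bar>d1 t\<bar> \<le> 2 * \<alpha>" if "0 \<le> t" "t < z" for t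
    proof -
      have "\<bar>d1 t - \<alpha>\<bar> < \<alpha>" using before[OF that] ca unfolding u_def by simp
      thus ?thesis by arith
    qed
    obtain \<xi> where xi: "0 < \<xi>" "\<xi> < z" "d1 z - d1 0 = (z - 0) * W p phi d1 \<xi>"
      using sol_mvt_d1[OF sol _ z0 zR] by auto
    have xiR: "\<xi> \<in> Ivl R" using Ivl_down[OF zR] xi by auto
    obtain \<eta> where eta: "0 < \<eta>" "\<eta> < \<xi>" "phi \<xi> - phi 0 = (\<xi> - 0) * d1 \<eta>"
      using sol_mvt_phi[OF sol _ xi(1) xiR] by auto
    have phixi: "\<bar>phi \<xi>\<bar> \<le> 2 * \<alpha> * Y"
    proof -
      have "\<bar>phi \<xi>\<bar> = \<xi> * \<bar>d1 \<eta>\<bar>" using eta sol_phi0[OF sol] xi by (simp add: abs_mult)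
      also have "\<dots> \<le> Y * (2 * \<alpha>)" using bnd[of \<eta>] eta xi zY by (intro mult_mono) auto
      finally show ?thesis by (simp add: mult.commute)
    qed
    have d1xi: "\<bar>d1 \<xi>\<bar> \<le> 2 * \<alpha>" using bnd xi by auto
    have Wxi: "\<bar>W p phi d1 \<xi>\<bar> \<le> Y * \<alpha> + \<bar>g\<bar> * (2 * \<alpha> * Y) + P2 * (\<alpha> * \<beta>)"
    proof -
      have "\<bar>W p phi d1 \<xi>\<bar> \<le> \<xi> / 2 * \<bar>d1 \<xi>\<bar> + \<bar>g\<bar> * \<bar>phi \<xi>\<bar> + \<bar>d1 \<xi>\<bar> powr p"
      proof -
        have e1: "\<bar>\<xi> / 2 * d1 \<xi>\<bar> = \<xi> / 2 * \<bar>d1 \<xi>\<bar>" using xi by (simp add: abs_mult)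
        have e2: "\<bar>g * phi \<xi>\<bar> = \<bar>g\<bar> * \<bar>phi \<xi>\<bar>" by (simp add: abs_mult)
        have e3: "\<bar>\<bar>d1 \<xi>\<bar> powr p\<bar> = \<bar>d1 \<xi>\<bar> powr p" by simp
        have "W p phi d1 \<xi> = \<xi> / 2 * d1 \<xi> - g * phi \<xi> - \<bar>d1 \<xi>\<bar> powr p" unfolding W_def g_def by simp
        thus ?thesis using e1 e2 e3 by arith
      qed
      moreover have "\<xi> / 2 * \<bar>d1 \<xi>\<bar> \<le> Y / 2 * (2 * \<alpha>)" using d1xi xi zY by (intro mult_mono) auto
      moreover have "\<bar>g\<bar> * \<bar>phi \<xi>\<bar> \<le> \<bar>g\<bar> * (2 * \<alpha> * Y)" using phixi by (intro mult_left_mono) auto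
      moreover have "\<bar>d1 \<xi>\<bar> powr p \<le> P2 * (\<alpha> * \<beta>)" unfolding P2_def \<beta>_def using pow_bound[OF p a d1xi] .
      ultimately show ?thesis by simp
    qed
    have "\<bar>d1 z - \<alpha>\<bar> = z * \<bar>W p phi d1 \<xi>\<bar>" using xi sol_d10[OF sol] z0 by (simp add: abs_mult)
    also have "\<dots> \<le> Y * (Y * \<alpha> + \<bar>g\<bar> * (2 * \<alpha> * Y) + P2 * (\<alpha> * \<beta>))"
      using Wxi zY z0 by (intro mult_mono) auto
    also have "\<dots> = \<alpha> * (\<beta> * \<beta> * D)" unfolding Y_def D(2) by (simp add: algebra_simps power2_eq_square)
    also have "\<dots> \<le> \<alpha> * (\<beta> * D)"
    proof -
      have "\<beta> * \<beta> * D \<le> 1 * \<beta> * D" using b0 b1 D by (intro mult_right_mono) auto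
      thus ?thesis using a by (intro mult_left_mono) auto
    qed
    also have "\<dots> < \<alpha> * (c / 2)"
    proof -
      have "\<beta> * D \<le> \<beta> * (D + 1)" using b0 by (simp add: distrib_left)
      hence "\<beta> * D < c / 2" using bD c by linarith
      thus ?thesis using a by simp
    qed
    finally have "\<bar>d1 z - \<alpha>\<bar> < c / 2 * \<alpha>" by (simp add: mult.commute)
    thus False using uz unfolding u_def by simp
  qed
  fix y assume "y \<in> Ivl R" "y \<le> K0 p * \<alpha> powr (p - 1)"
  hence "y \<in> S" unfolding S_def Y_def K_def \<beta>_def by simp
  thus "\<bar>d1 y - \<alpha>\<bar> < c0 p / 2 * \<alpha>" using main unfolding u_def c_def by simp
qed

lemma W_cont:
  assumes p: "p > 1" and sol: "is_sol p \<alpha> R phi d1 d2"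
  shows "continuous_on (Ivl R) (W p phi d1)"
proof -
  have c1: "continuous_on (Ivl R) d1" and c2: "continuous_on (Ivl R) phi"
    using sol_cd1[OF sol] sol_cphi[OF sol] .
  have "continuous_on (Ivl R) (\<lambda>y. \<bar>d1 y\<bar> powr p)"
    by (rule continuous_on_powr') (use p in \<open>auto intro!: continuous_intros c1\<close>)
  moreover have "continuous_on (Ivl R) (\<lambda>y. y / 2 * d1 y - gam p * phi y)"
    by (intro continuous_intros c1 c2) auto
  ultimately show ?thesis unfolding W_def[abs_def] by (rule continuous_on_diff[rotated])
qed

lemma W_deriv:
  assumes p: "p > 1" and sol: "is_sol p \<alpha> R phi d1 d2" and y: "y \<in> Ivl R" "0 < y" and pos: "d1 y > 0"
  shows "DERIV (W p phi d1) y :> 1/2 * d1 y + y / 2 * d2 y - gam p * d1 y - p * d1 y powr (p - 1) * d2 y"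
proof -
  note dd1 = sol_dd1[OF sol y] and dphi = sol_dphi[OF sol y]
  define G where "G t = \<bar>d1 t\<bar> powr p" for t
  have dpow: "DERIV (\<lambda>t. d1 t powr p) y :> p * d1 y powr (p - 1) * d2 y"
    using DERIV_fun_powr[OF dd1 pos, of p] by simp
  have "eventually (\<lambda>t. d1 t > 0) (at y)"
    using DERIV_isCont[OF dd1] pos unfolding isCont_def by (rule order_tendstoD(1))
  hence ev: "eventually (\<lambda>t. d1 t powr p = G t) (at y)" unfolding G_def by eventually_elim auto
  have dG: "DERIV G y :> p * d1 y powr (p - 1) * d2 y"
    using has_field_derivative_cong_eventually[OF ev] dpow pos unfolding G_def by simp
  have eq: "W p phi d1 = (\<lambda>t. t / 2 * d1 t - gam p * phi t - G t)" unfolding W_def[abs_def] G_def by simp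
  have "DERIV (\<lambda>t. t / 2 * d1 t - gam p * phi t - G t) y :>
      (1 / 2 * d1 y + y / 2 * d2 y) - gam p * d1 y - p * d1 y powr (p - 1) * d2 y"
  proof -
    have "DERIV (\<lambda>t. t / 2) y :> 1 / 2" using DERIV_cdivide[OF DERIV_ident, of 2 y] by simp
    from DERIV_mult[OF this dd1] have a: "DERIV (\<lambda>t. t / 2 * d1 t) y :> 1 / 2 * d1 y + y / 2 * d2 y"
      by (simp add: algebra_simps)
    have b: "DERIV (\<lambda>t. gam p * phi t) y :> gam p * d1 y" by (rule DERIV_cmult[OF dphi])
    show ?thesis using DERIV_diff[OF DERIV_diff[OF a b] dG] by simp
  qed
  thus ?thesis unfolding eq by simp
qed

lemma W_zero_deriv:
  assumes p: "p > 1" and sol: "is_sol p \<alpha> R phi d1 d2" and y: "y \<in> Ivl R" "0 < y" and pos: "d1 y > 0"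
    and Wz: "W p phi d1 y = 0"
  shows "DERIV (W p phi d1) y :> (1/2 - gam p) * d1 y" and "0 < (1/2 - gam p) * d1 y"
proof -
  have "d2 y = 0" using sol_eq[OF sol y] Wz by simp
  thus "DERIV (W p phi d1) y :> (1/2 - gam p) * d1 y"
    using W_deriv[OF assms(1-5)] by (simp add: algebra_simps)
  show "0 < (1/2 - gam p) * d1 y" using gam_lt[OF p] pos by simp
qed

lemma phase2:
  assumes p: "p > 1" and sol: "is_sol p \<alpha> R phi d1 d2" and a: "0 < \<alpha>"
    and small: "\<alpha> powr (p - 1) < b0 p"
    and YR: "K0 p * \<alpha> powr (p - 1) \<in> Ivl R"
  shows "\<And>y. y \<in> Ivl R \<Longrightarrow> K0 p * \<alpha> powr (p - 1) \<le> y \<Longrightarrow> W p phi d1 y > 0"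
proof -
  define \<beta> where "\<beta> = \<alpha> powr (p - 1)"
  define K where "K = K0 p"
  define Y where "Y = K * \<beta>"
  define c where "c = c0 p"
  define g where "g = gam p"
  define gp where "gp = max g 0"
  define P2 where "P2 = (2::real) powr p"
  have bpos: "\<beta> > 0" unfolding \<beta>_def using a by simp
  have c: "0 < c" "c \<le> 1/2" "c = 1/2 - gp" unfolding c_def gp_def g_def c0_def using c0_pos[OF p] c0_le[of p]
    unfolding c0_def by auto
  have K: "0 < K" "K = 4 * P2 / c" unfolding K_def P2_def c_def K0_def using K0_pos[OF p] unfolding K0_def by auto
  have Ypos: "0 < Y" unfolding Y_def using K(1) bpos by (rule mult_pos_pos)
  have YR': "Y \<in> Ivl R" using YR unfolding Y_def K_def \<beta>_def .
  have R: "0 < R" using sol_R[OF sol] .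
  note ph1 = phase1[OF p sol a small, folded \<beta>_def K_def, folded Y_def c_def]
  have ca: "c / 2 * \<alpha> \<le> 1/4 * \<alpha>" using c a by (intro mult_right_mono) auto
  have d1Y: "\<bar>d1 Y - \<alpha>\<bar> < c / 2 * \<alpha>" using ph1[OF YR'] by simp
  have d1Ypos: "d1 Y > 0" using d1Y ca by arith
  obtain \<eta> where eta: "0 < \<eta>" "\<eta> < Y" "phi Y - phi 0 = (Y - 0) * d1 \<eta>"
    using sol_mvt_phi[OF sol _ Ypos YR'] by auto
  have etaR: "\<eta> \<in> Ivl R" using Ivl_down[OF YR'] eta by auto
  have d1eta: "\<bar>d1 \<eta> - \<alpha>\<bar> < c / 2 * \<alpha>" using ph1[OF etaR] eta by simp
  have phiY: "phi Y = Y * d1 \<eta>" using eta sol_phi0[OF sol] by simp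
  have WY: "W p phi d1 Y > 0"
  proof -
    have e1: "(1 - c/2) * \<alpha> = \<alpha> - c / 2 * \<alpha>" "(1 + c/2) * \<alpha> = \<alpha> + c / 2 * \<alpha>"
      by (simp_all add: algebra_simps)
    have "d1 Y \<ge> (1 - c/2) * \<alpha>" unfolding e1 using d1Y by arith
    hence t1: "Y / 2 * d1 Y \<ge> Y / 2 * ((1 - c/2) * \<alpha>)"
      using Ypos by (intro mult_left_mono) auto
    have "d1 \<eta> \<le> (1 + c/2) * \<alpha>" unfolding e1 using d1eta by arith
    hence phile: "phi Y \<le> Y * ((1 + c/2) * \<alpha>)" unfolding phiY
      using Ypos by (intro mult_left_mono) auto
    have phige: "phi Y \<ge> 0" unfolding phiY using d1eta Ypos ca by (intro mult_nonneg_nonneg) arith+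
    have t2: "- g * phi Y \<ge> - gp * (Y * ((1 + c/2) * \<alpha>))"
    proof (cases "g \<ge> 0")
      case True
      then show ?thesis using phile unfolding gp_def by (simp add: mult_left_mono)
    next
      case False
      then show ?thesis using phige unfolding gp_def by (simp add: mult_nonpos_nonneg)
    qed
    have "\<bar>d1 Y\<bar> \<le> 2 * \<alpha>" using d1Y ca by arith
    hence t3: "\<bar>d1 Y\<bar> powr p \<le> P2 * (\<alpha> * \<beta>)" unfolding P2_def \<beta>_def using pow_bound[OF p a] by blast
    have "W p phi d1 Y \<ge> Y / 2 * ((1 - c/2) * \<alpha>) - gp * (Y * ((1 + c/2) * \<alpha>)) - P2 * (\<alpha> * \<beta>)"
      unfolding W_def g_def[symmetric] using t1 t2 t3 by linarith
    also have "Y / 2 * ((1 - c/2) * \<alpha>) - gp * (Y * ((1 + c/2) * \<alpha>)) = Y * \<alpha> * (c - c/2 * (1/2 + gp))"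
    proof -
      have gpe: "gp = 1/2 - c" using c(3) by simp
      show ?thesis unfolding gpe by (simp add: field_simps)
    qed
    also have "Y * \<alpha> * (c - c/2 * (1/2 + gp)) \<ge> Y * \<alpha> * (c / 2)"
    proof -
      have "gp \<le> 1/2" using c by simp
      hence "c/2 * (1/2 + gp) \<le> c/2 * 1" using c by (intro mult_left_mono) auto
      thus ?thesis using Ypos a by (intro mult_left_mono) auto
    qed
    hence "Y * \<alpha> * (c - c/2 * (1/2 + gp)) - P2 * (\<alpha> * \<beta>) \<ge> Y * \<alpha> * (c / 2) - P2 * (\<alpha> * \<beta>)" by simp
    moreover have "Y * \<alpha> * (c / 2) = 2 * P2 * (\<alpha> * \<beta>)" unfolding Y_def K(2) using c by simp
    moreover have "P2 * (\<alpha> * \<beta>) > 0" unfolding P2_def using a bpos by simp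
    ultimately show ?thesis by linarith
  qed
  define S where "S = {y \<in> Ivl R. Y \<le> y}"
  have main: "W p phi d1 y > 0" if "y \<in> S" for y
  proof (rule first_zero[of Y S "W p phi d1"])
    show "Y \<in> S" unfolding S_def using YR' by simp
    show "\<And>y. y \<in> S \<Longrightarrow> Y \<le> y" unfolding S_def by auto
    show "\<And>y t. y \<in> S \<Longrightarrow> Y \<le> t \<Longrightarrow> t \<le> y \<Longrightarrow> t \<in> S" unfolding S_def using Ivl_down Ypos by auto
    show "continuous_on S (W p phi d1)"
      by (rule continuous_on_subset[OF W_cont[OF p sol]]) (auto simp: S_def)
    show "0 < W p phi d1 Y" by (rule WY)
    show "y \<in> S" by fact
  next
    fix z assume zS: "z \<in> S" and zY: "Y < z" and Wz: "W p phi d1 z = 0"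
      and before: "\<And>t. Y \<le> t \<Longrightarrow> t < z \<Longrightarrow> 0 < W p phi d1 t"
    have zR: "z \<in> Ivl R" using zS unfolding S_def by auto
    have z0: "0 < z" using zY Ypos by simp
    obtain \<xi> where xi: "Y < \<xi>" "\<xi> < z" "d1 z - d1 Y = (z - Y) * W p phi d1 \<xi>"
      using sol_mvt_d1[OF sol _ zY zR] Ypos by auto
    have "W p phi d1 \<xi> > 0" using before xi by simp
    hence "(z - Y) * W p phi d1 \<xi> > 0" using xi by simp
    hence "d1 z > d1 Y" using xi by simp
    hence d1z: "d1 z > 0" using d1Ypos by simp
    obtain d where d: "d > 0" "\<And>h. h > 0 \<Longrightarrow> h < d \<Longrightarrow> W p phi d1 (z - h) < W p phi d1 z"
      using DERIV_pos_inc_left[OF W_zero_deriv(1)[OF p sol zR z0 d1z Wz] W_zero_deriv(2)[OF p sol zR z0 d1z Wz]]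
      by blast
    obtain m where m: "m \<le> z - Y" "m \<le> d" "m > 0" using d zY by (intro that[of "min d (z - Y)"]) auto
    define h where "h = m / 2"
    have h: "h > 0" "h < d" "Y \<le> z - h" "z - h < z" unfolding h_def using m by linarith+
    show False using d(2)[OF h(1,2)] before[OF h(3,4)] Wz by simp
  qed
  fix y assume "y \<in> Ivl R" "K0 p * \<alpha> powr (p - 1) \<le> y"
  thus "W p phi d1 y > 0" using main unfolding S_def Y_def K_def \<beta>_def by simp
qed



lemma d1_pos:
  assumes p: "p > 1" and sol: "is_sol p \<alpha> R phi d1 d2" and a: "0 < \<alpha>"
    and small: "\<alpha> powr (p - 1) < b0 p" and y: "y \<in> Ivl R"
  shows "d1 y > 0"
proof -
  define Y where "Y = K0 p * \<alpha> powr (p - 1)"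
  have c: "0 < c0 p" "c0 p \<le> 1/2" using c0_pos[OF p] c0_le by auto
  have ca: "c0 p / 2 * \<alpha> \<le> 1/4 * \<alpha>" using c a by (intro mult_right_mono) auto
  have Ypos: "0 < Y" unfolding Y_def using K0_pos[OF p] a by simp
  show ?thesis
  proof (cases "y \<le> Y")
    case True
    hence "\<bar>d1 y - \<alpha>\<bar> < c0 p / 2 * \<alpha>" using phase1[OF p sol a small y] unfolding Y_def by simp
    then show ?thesis using ca by arith
  next
    case False
    have YR: "Y \<in> Ivl R" using Ivl_down[OF y] False Ypos by auto
    have "\<bar>d1 Y - \<alpha>\<bar> < c0 p / 2 * \<alpha>" using phase1[OF p sol a small YR] unfolding Y_def by simp
    hence d1Y: "d1 Y > 0" using ca by arith
    obtain \<xi> where xi: "Y < \<xi>" "\<xi> < y" "d1 y - d1 Y = (y - Y) * W p phi d1 \<xi>"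
      using sol_mvt_d1[OF sol _ _ y, of Y] Ypos False by auto
    have "\<xi> \<in> Ivl R" using Ivl_down[OF y] xi Ypos by auto
    hence "W p phi d1 \<xi> > 0" using phase2[OF p sol a small, folded Y_def, OF YR] xi by simp
    hence "(y - Y) * W p phi d1 \<xi> > 0" using xi by simp
    thus ?thesis using xi d1Y by simp
  qed
qed

lemma phi_pos:
  assumes p: "p > 1" and sol: "is_sol p \<alpha> R phi d1 d2" and a: "0 < \<alpha>"
    and small: "\<alpha> powr (p - 1) < b0 p" and y: "y \<in> Ivl R" "0 < y"
  shows "phi y > 0"
proof -
  obtain \<eta> where eta: "0 < \<eta>" "\<eta> < y" "phi y - phi 0 = (y - 0) * d1 \<eta>"
    using sol_mvt_phi[OF sol _ y(2) y(1)] by auto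
  have "\<eta> \<in> Ivl R" using Ivl_down[OF y(1)] eta by auto
  hence "d1 \<eta> > 0" using d1_pos[OF p sol a small] by blast
  thus ?thesis using eta y sol_phi0[OF sol] by simp
qed

lemma phi_nonneg:
  assumes p: "p > 1" and sol: "is_sol p \<alpha> R phi d1 d2" and a: "0 < \<alpha>"
    and small: "\<alpha> powr (p - 1) < b0 p" and y: "y \<in> Ivl R"
  shows "phi y \<ge> 0"
  using phi_pos[OF p sol a small y] sol_phi0[OF sol] Ivl_nonneg[OF y]
  by (cases "y = 0") auto

lemma d1_bound:
  assumes p: "p > 1" and sol: "is_sol p \<alpha> R phi d1 d2" and a: "0 < \<alpha>"
    and small: "\<alpha> powr (p - 1) < b0 p" and y: "y \<in> Ivl R" and yT: "y \<le> T"
  shows "d1 y \<le> \<alpha> * exp ((1 + T / 2 + \<bar>gam p\<bar>) * T)"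
proof -
  define k where "k = 1 + T / 2 + \<bar>gam p\<bar>"
  have y0: "0 \<le> y" using Ivl_nonneg[OF y] .
  have k: "0 < k" unfolding k_def using y0 yT by simp
  define F where "F t = exp (- k * t) * (phi t + d1 t)" for t
  have sub: "{0..y} \<subseteq> Ivl R" using Ivl_sub[OF y] .
  have dF: "\<exists>d. DERIV F x :> d \<and> d \<le> 0" if x: "0 < x" "x < y" for x
  proof -
    have xR: "x \<in> Ivl R" using sub x by auto
    have "DERIV F x :> (- k) * exp (- k * x) * (phi x + d1 x) + exp (- k * x) * (d1 x + d2 x)"
      unfolding F_def by (rule derivative_eq_intros refl sol_dphi[OF sol xR x(1)] sol_dd1[OF sol xR x(1)])+ simp
    moreover have "(- k) * exp (- k * x) * (phi x + d1 x) + exp (- k * x) * (d1 x + d2 x) \<le> 0"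
    proof -
      have ph: "phi x \<ge> 0" using phi_nonneg[OF p sol a small xR] .
      have d1x: "d1 x > 0" using d1_pos[OF p sol a small xR] .
      have "d2 x = x / 2 * d1 x - gam p * phi x - \<bar>d1 x\<bar> powr p" using sol_eq[OF sol xR x(1)] unfolding W_def .
      moreover have "x / 2 * d1 x \<le> T / 2 * d1 x" using x yT d1x by (intro mult_right_mono) auto
      moreover have "- gam p * phi x \<le> \<bar>gam p\<bar> * phi x" using ph by (intro mult_right_mono) auto
      moreover have "\<bar>d1 x\<bar> powr p \<ge> 0" by simp
      ultimately have "d1 x + d2 x \<le> d1 x + T / 2 * d1 x + \<bar>gam p\<bar> * phi x" by linarith
      also have "\<dots> \<le> k * (phi x + d1 x)"
      proof -
        have "k * (phi x + d1 x) = (phi x + d1 x) + T / 2 * phi x + T / 2 * d1 x + \<bar>gam p\<bar> * phi x + \<bar>gam p\<bar> * d1 x"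
          unfolding k_def by (simp add: algebra_simps)
        moreover have "T / 2 * phi x \<ge> 0" "\<bar>gam p\<bar> * d1 x \<ge> 0" using ph d1x x yT by auto
        ultimately show ?thesis using ph by linarith
      qed
      finally have "exp (- k * x) * (d1 x + d2 x) \<le> exp (- k * x) * (k * (phi x + d1 x))"
        by (intro mult_left_mono) auto
      thus ?thesis by (simp add: algebra_simps)
    qed
    ultimately show ?thesis by blast
  qed
  have cF: "continuous_on {0..y} F" unfolding F_def
    by (intro continuous_intros continuous_on_subset[OF sol_cphi[OF sol] sub] continuous_on_subset[OF sol_cd1[OF sol] sub])
  have "F y \<le> F 0" using DERIV_nonpos_imp_decreasing_open[of 0 y F] dF cF y0 by auto
  also have "F 0 = \<alpha>" unfolding F_def using sol_phi0[OF sol] sol_d10[OF sol] by simp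
  finally have "exp (- k * y) * (phi y + d1 y) \<le> \<alpha>" unfolding F_def .
  hence "phi y + d1 y \<le> \<alpha> * exp (k * y)"
    by (simp add: exp_minus field_simps)
  moreover have "exp (k * y) \<le> exp (k * T)" using k yT by simp
  moreover have "phi y \<ge> 0" using phi_nonneg[OF p sol a small y] .
  ultimately have "d1 y \<le> \<alpha> * exp (k * T)" using a
    by (smt (verit) mult_left_mono)
  thus ?thesis unfolding k_def .
qed

lemma Ivl_init:
  assumes "0 < R"
  obtains r where "r > 0" "\<And>t. 0 \<le> t \<Longrightarrow> t < r \<Longrightarrow> t \<in> Ivl R"
proof -
  from Ivl_cases[OF assms] consider "Ivl R = {0..}" | r where "r>0" "Ivl R = {0..<r}" by blast
  then show ?thesis
  proof cases
    case 1 then show ?thesis using that[of 1] by auto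
  next
    case 2 then show ?thesis using that[of r] by auto
  qed
qed

lemma d2_0:
  assumes p: "p > 1" and sol: "is_sol p \<alpha> R phi d1 d2" and a: "0 < \<alpha>"
  shows "d2 0 < 0"
proof (rule ccontr)
  assume "\<not> d2 0 < 0"
  hence d20: "d2 0 \<ge> 0" by simp
  have R: "0 < R" using sol_R[OF sol] .
  have R0: "0 \<in> Ivl R" using Ivl_0[OF R] .
  define w0 where "w0 = W p phi d1 0"
  have w0: "w0 = - (\<alpha> powr p)" unfolding w0_def W_def using sol_phi0[OF sol] sol_d10[OF sol] a by simp
  have w0neg: "w0 < 0" unfolding w0 using a by simp
  obtain \<delta> where \<delta>: "\<delta> > 0" "\<And>t. t \<in> Ivl R \<Longrightarrow> dist t 0 < \<delta> \<Longrightarrow> dist (W p phi d1 t) w0 < - w0 / 2"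
    using W_cont[OF p sol] R0 w0neg unfolding continuous_on_iff w0_def
    by (metis neg_0_less_iff_less half_gt_zero)
  define gf where "gf t = d1 t - w0 / 2 * t" for t
  have "(gf has_real_derivative d2 0 - w0 / 2 * 1) (at 0 within Ivl R)"
    unfolding gf_def by (rule derivative_eq_intros refl sol_dd1w[OF sol R0])+ simp
  moreover have "0 < d2 0 - w0 / 2 * 1" using d20 w0neg by simp
  ultimately obtain d where d: "d > 0" "\<And>h. h > 0 \<Longrightarrow> 0 + h \<in> Ivl R \<Longrightarrow> h < d \<Longrightarrow> gf 0 < gf (0 + h)"
    using has_real_derivative_pos_inc_right by blast
  obtain r where r: "r > 0" "\<And>t. 0 \<le> t \<Longrightarrow> t < r \<Longrightarrow> t \<in> Ivl R" using Ivl_init[OF R] by blast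
  obtain m where m: "m > 0" "m \<le> d" "m \<le> \<delta>" "m \<le> r"
    using d \<delta> r by (intro that[of "min d (min \<delta> r)"]) auto
  define h where "h = m / 2"
  have h: "h > 0" "h < d" "h < \<delta>" "h \<in> Ivl R" unfolding h_def using m r(2)[of "m/2"] by auto
  have "gf 0 < gf h" using d(2)[of h] h by simp
  obtain \<xi> where xi: "0 < \<xi>" "\<xi> < h" "d1 h - d1 0 = (h - 0) * W p phi d1 \<xi>"
    using sol_mvt_d1[OF sol _ h(1) h(4)] by auto
  have xiR: "\<xi> \<in> Ivl R" using Ivl_down[OF h(4)] xi by auto
  have "dist (W p phi d1 \<xi>) w0 < - w0 / 2" using \<delta>(2)[OF xiR] xi h by (simp add: dist_real_def)
  hence "W p phi d1 \<xi> < w0 / 2" by (simp add: dist_real_def abs_less_iff)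
  hence "h * W p phi d1 \<xi> < h * (w0 / 2)" using h by simp
  hence "gf h < gf 0" unfolding gf_def using xi by (simp add: algebra_simps)
  thus False using \<open>gf 0 < gf h\<close> by simp
qed

lemma sign_structure:
  assumes p: "p > 1" and sol: "is_sol p \<alpha> R phi d1 d2" and a: "0 < \<alpha>"
    and small: "\<alpha> powr (p - 1) < b0 p" and YR: "K0 p * \<alpha> powr (p - 1) \<in> Ivl R"
  shows "\<exists>Rb>0. (\<forall>y. 0 \<le> y \<and> y < Rb \<longrightarrow> d2 y < 0) \<and> (\<forall>y\<in>Ivl R. Rb < y \<longrightarrow> d2 y > 0)"
proof -
  define Y where "Y = K0 p * \<alpha> powr (p - 1)"
  have Ypos: "0 < Y" unfolding Y_def using K0_pos[OF p] a by simp
  have YR': "Y \<in> Ivl R" using YR unfolding Y_def .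
  note Wc = W_cont[OF p sol]
  have cY: "continuous_on {0..Y} (W p phi d1)" using continuous_on_subset[OF Wc Ivl_sub[OF YR']] .
  have W0: "W p phi d1 0 < 0" unfolding W_def using sol_phi0[OF sol] sol_d10[OF sol] a by simp
  have WY: "W p phi d1 Y > 0" using phase2[OF p sol a small YR, folded Y_def, OF YR'] by simp
  define Z where "Z = {0..Y} \<inter> W p phi d1 -` {0}"
  have "closed Z" unfolding Z_def by (rule continuous_closed_preimage[OF cY]) auto
  moreover obtain x0 where "0 \<le> x0" "x0 \<le> Y" "W p phi d1 x0 = 0"
    using IVT'[of "W p phi d1" 0 0 Y] W0 WY Ypos cY by auto
  hence "Z \<noteq> {}" unfolding Z_def by auto
  moreover have bb: "bdd_below Z" unfolding Z_def by auto
  ultimately have "Inf Z \<in> Z" using closed_contains_Inf by blast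
  define Rb where "Rb = Inf Z"
  have RbZ: "Rb \<in> Z" using \<open>Inf Z \<in> Z\<close> Rb_def by simp
  hence Rb: "0 \<le> Rb" "Rb \<le> Y" "W p phi d1 Rb = 0" unfolding Z_def by auto
  have Rbpos: "0 < Rb" using Rb W0 by (cases "Rb = 0") auto
  have RbR: "Rb \<in> Ivl R" using Ivl_down[OF YR'] Rb by auto
  have neg: "d2 y < 0" if y: "0 \<le> y" "y < Rb" for y
  proof (cases "y = 0")
    case True
    then show ?thesis using d2_0[OF p sol a] by simp
  next
    case False
    hence ypos: "0 < y" using y by simp
    have yR: "y \<in> Ivl R" using Ivl_down[OF RbR] y by auto
    have "W p phi d1 y < 0"
    proof (rule ccontr)
      assume "\<not> W p phi d1 y < 0"
      hence "W p phi d1 y \<ge> 0" by simp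
      moreover have "continuous_on {0..y} (W p phi d1)"
        using continuous_on_subset[OF cY] y Rb by auto
      ultimately obtain x where x: "0 \<le> x" "x \<le> y" "W p phi d1 x = 0"
        using IVT'[of "W p phi d1" 0 0 y] W0 y by auto
      hence "x \<in> Z" unfolding Z_def using y Rb by auto
      hence "Rb \<le> x" unfolding Rb_def using bb by (simp add: cInf_lower)
      thus False using x y by simp
    qed
    thus ?thesis using sol_eq[OF sol yR ypos] by simp
  qed
  have d1Rb: "d1 Rb > 0" using d1_pos[OF p sol a small RbR] .
  obtain d where d: "d > 0" "\<And>h. h > 0 \<Longrightarrow> h < d \<Longrightarrow> W p phi d1 Rb < W p phi d1 (Rb + h)"
    using DERIV_pos_inc_right[OF W_zero_deriv(1)[OF p sol RbR Rbpos d1Rb Rb(3)] W_zero_deriv(2)[OF p sol RbR Rbpos d1Rb Rb(3)]]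
    by blast
  have posW: "W p phi d1 y > 0" if y: "y \<in> Ivl R" "Rb < y" for y
  proof (cases "y < Rb + d")
    case True
    then show ?thesis using d(2)[of "y - Rb"] y Rb by simp
  next
    case False
    define a0 where "a0 = Rb + d / 2"
    have a0R: "a0 \<in> Ivl R" using Ivl_down[OF y(1)] False d Rb unfolding a0_def by auto
    have Wa0: "W p phi d1 a0 > 0" using d(2)[of "d/2"] d Rb unfolding a0_def by simp
    define S where "S = {t \<in> Ivl R. a0 \<le> t}"
    show ?thesis
    proof (rule first_zero[of a0 S "W p phi d1"])
      show "a0 \<in> S" unfolding S_def using a0R by simp
      show "\<And>y. y \<in> S \<Longrightarrow> a0 \<le> y" unfolding S_def by auto
      show "\<And>y t. y \<in> S \<Longrightarrow> a0 \<le> t \<Longrightarrow> t \<le> y \<Longrightarrow> t \<in> S"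
        unfolding S_def using Ivl_down Rb d unfolding a0_def by auto
      show "continuous_on S (W p phi d1)" by (rule continuous_on_subset[OF Wc]) (auto simp: S_def)
      show "0 < W p phi d1 a0" by (rule Wa0)
      show "y \<in> S" unfolding S_def using y False d unfolding a0_def by auto
    next
      fix z assume zS: "z \<in> S" and za: "a0 < z" and Wz: "W p phi d1 z = 0"
        and before: "\<And>t. a0 \<le> t \<Longrightarrow> t < z \<Longrightarrow> 0 < W p phi d1 t"
      have zR: "z \<in> Ivl R" using zS unfolding S_def by auto
      have z0: "0 < z" using za Rb d unfolding a0_def by simp
      have d1z: "d1 z > 0" using d1_pos[OF p sol a small zR] .
      obtain e where e: "e > 0" "\<And>h. h > 0 \<Longrightarrow> h < e \<Longrightarrow> W p phi d1 (z - h) < W p phi d1 z"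
        using DERIV_pos_inc_left[OF W_zero_deriv(1)[OF p sol zR z0 d1z Wz] W_zero_deriv(2)[OF p sol zR z0 d1z Wz]]
        by blast
      obtain m where m: "m \<le> z - a0" "m \<le> e" "m > 0" using e za by (intro that[of "min e (z - a0)"]) auto
      define h where "h = m / 2"
      have h: "h > 0" "h < e" "a0 \<le> z - h" "z - h < z" unfolding h_def using m by linarith+
      show False using e(2)[OF h(1,2)] before[OF h(3,4)] Wz by simp
    qed
  qed
  show ?thesis
  proof (intro exI[of _ Rb] conjI allI impI ballI)
    show "0 < Rb" by (rule Rbpos)
    show "\<And>y. 0 \<le> y \<and> y < Rb \<Longrightarrow> d2 y < 0" using neg by blast
    fix y assume "y \<in> Ivl R" "Rb < y"
    thus "0 < d2 y" using posW sol_eq[OF sol] Rbpos by simp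
  qed
qed



lemma vd_fst:
  assumes "(x has_vector_derivative (a, b)) F"
  shows "((\<lambda>t. fst (x t)) has_real_derivative a) F"
proof -
  have "((\<lambda>t. fst (x t)) has_derivative (\<lambda>h. fst (h *\<^sub>R (a, b)))) F"
    using has_derivative_fst[OF assms[unfolded has_vector_derivative_def]] .
  moreover have "(\<lambda>h. fst (h *\<^sub>R (a, b))) = (*) a" by (auto simp: fun_eq_iff)
  ultimately show ?thesis by (simp add: has_field_derivative_def)
qed

lemma vd_snd:
  assumes "(x has_vector_derivative (a, b)) F"
  shows "((\<lambda>t. snd (x t)) has_real_derivative b) F"
proof -
  have "((\<lambda>t. snd (x t)) has_derivative (\<lambda>h. snd (h *\<^sub>R (a, b)))) F"
    using has_derivative_snd[OF assms[unfolded has_vector_derivative_def]] .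
  moreover have "(\<lambda>h. snd (h *\<^sub>R (a, b))) = (*) b" by (auto simp: fun_eq_iff)
  ultimately show ?thesis by (simp add: has_field_derivative_def)
qed

lemma Ivl_ereal: "Ivl (ereal r) = {0..<r}" by (auto simp: Ivl_def)
lemma Ivl_inf: "Ivl \<infinity> = {0..}" by (auto simp: Ivl_def)

lemma trunc_lip:
  fixes g M p T s :: real and a b :: "real \<times> real"
  assumes p: "p > 1" and M: "M \<ge> 0" and s: "s \<in> {0..T}"
  defines "f \<equiv> \<lambda>s (u::real, v::real). (v, s / 2 * v - g * u - min \<bar>v\<bar> M powr p)"
  shows "norm (f s a - f s b) \<le> (1 + T / 2 + \<bar>g\<bar> + p * M powr (p - 1)) * norm (a - b)"
proof -
  obtain u1 v1 u2 v2 where ab: "a = (u1, v1)" "b = (u2, v2)" by fastforce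
  define N where "N = norm (a - b)"
  have nu: "\<bar>u1 - u2\<bar> \<le> N" and nv: "\<bar>v1 - v2\<bar> \<le> N" unfolding N_def ab
    using norm_fst_le[of "u1 - u2" "v1 - v2"] norm_snd_le[of "v1 - v2" "u1 - u2"] by auto
  define G where "G = min \<bar>v1\<bar> M powr p - min \<bar>v2\<bar> M powr p"
  have G: "\<bar>G\<bar> \<le> p * M powr (p - 1) * \<bar>v1 - v2\<bar>" unfolding G_def using min_powr_lip[of p M v1 v2] p M by simp
  have "f s a - f s b = (v1 - v2, s / 2 * (v1 - v2) - g * (u1 - u2) - G)"
    unfolding f_def ab G_def by (simp add: right_diff_distrib; linarith)
  hence "norm (f s a - f s b) \<le> \<bar>v1 - v2\<bar> + \<bar>s / 2 * (v1 - v2) - g * (u1 - u2) - G\<bar>"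
    using norm_Pair_le by (metis real_norm_def)
  also have "\<dots> \<le> \<bar>v1 - v2\<bar> + (s / 2 * \<bar>v1 - v2\<bar> + \<bar>g\<bar> * \<bar>u1 - u2\<bar> + \<bar>G\<bar>)"
  proof -
    have "\<bar>s / 2 * (v1 - v2)\<bar> = s / 2 * \<bar>v1 - v2\<bar>" using s by (simp add: abs_mult)
    moreover have "\<bar>g * (u1 - u2)\<bar> = \<bar>g\<bar> * \<bar>u1 - u2\<bar>" by (simp add: abs_mult)
    ultimately show ?thesis by arith
  qed
  also have "\<dots> \<le> N + (T / 2 * N + \<bar>g\<bar> * N + p * M powr (p - 1) * N)"
  proof -
    have "s / 2 * \<bar>v1 - v2\<bar> \<le> T / 2 * N" using s nv by (intro mult_mono) auto
    moreover have "\<bar>g\<bar> * \<bar>u1 - u2\<bar> \<le> \<bar>g\<bar> * N" using nu by (intro mult_left_mono) auto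
    moreover have "p * M powr (p - 1) * \<bar>v1 - v2\<bar> \<le> p * M powr (p - 1) * N" using nv p by (intro mult_left_mono) auto
    ultimately show ?thesis using nv G by linarith
  qed
  also have "\<dots> = (1 + T / 2 + \<bar>g\<bar> + p * M powr (p - 1)) * N" by (simp add: algebra_simps)
  finally show ?thesis unfolding N_def .
qed

lemma exists_T:
  assumes p: "p > 1" and a: "0 < \<alpha>" and small: "\<alpha> powr (p - 1) < b0 p" and T: "0 < T"
  shows "\<exists>phi d1 d2. is_sol p \<alpha> (ereal T) phi d1 d2"
proof -
  define g where "g = gam p"
  define M where "M = \<alpha> * exp ((1 + T / 2 + \<bar>g\<bar>) * T) + 1"
  have M0: "M \<ge> 0" unfolding M_def using a by (simp add: add_nonneg_nonneg)
  define f where "f = (\<lambda>s (u::real, v::real). (v, s / 2 * v - g * u - min \<bar>v\<bar> M powr p))"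
  define L where "L = 1 + T / 2 + \<bar>g\<bar> + p * M powr (p - 1)"
  have L: "0 < L" unfolding L_def using T p by (simp add: add_pos_nonneg)
  have lip: "\<And>s a b. s \<in> {0..T} \<Longrightarrow> norm (f s a - f s b) \<le> L * norm (a - b)"
    unfolding f_def L_def by (rule trunc_lip[OF p M0])
  have cont: "continuous_on {0..T} (\<lambda>s. f s (w s))" if w: "continuous_on {0..T} w" for w
  proof -
    have c1: "continuous_on {0..T} (\<lambda>s. snd (w s))" and c2: "continuous_on {0..T} (\<lambda>s. fst (w s))"
      using w by (auto intro: continuous_intros)
    have c3: "continuous_on {0..T} (\<lambda>s. min \<bar>snd (w s)\<bar> M powr p)"
      by (rule continuous_on_powr') (use p M0 in \<open>auto intro!: continuous_intros c1\<close>)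
    have c4: "continuous_on {0..T} (\<lambda>s. s / 2 * snd (w s) - g * fst (w s))"
      by (intro continuous_intros c1 c2) auto
    have "continuous_on {0..T} (\<lambda>s. (snd (w s), s / 2 * snd (w s) - g * fst (w s) - min \<bar>snd (w s)\<bar> M powr p))"
      by (intro continuous_on_Pair c1 continuous_on_diff c4 c3)
    moreover have "(\<lambda>s. f s (w s)) = (\<lambda>s. (snd (w s), s / 2 * snd (w s) - g * fst (w s) - min \<bar>snd (w s)\<bar> M powr p))"
      unfolding f_def by (auto simp: fun_eq_iff split: prod.splits)
    ultimately show ?thesis by metis
  qed
  obtain x where x0: "x 0 = (0, \<alpha>)" and xd: "\<And>t. t \<in> {0..T} \<Longrightarrow> (x has_vector_derivative f t (x t)) (at t within {0..T})"
    using ode_exists[OF T L lip cont, of "(0, \<alpha>)"] by blast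
  define phi where "phi t = fst (x t)" for t
  define d1 where "d1 t = snd (x t)" for t
  define d2 where "d2 t = t / 2 * d1 t - g * phi t - min \<bar>d1 t\<bar> M powr p" for t
  have fx: "f t (x t) = (d1 t, d2 t)" for t unfolding f_def phi_def d1_def d2_def by (simp split: prod.splits)
  have dphi: "(phi has_real_derivative d1 t) (at t within {0..T})" if "t \<in> {0..T}" for t
    using vd_fst[OF xd[OF that, unfolded fx]] unfolding phi_def[abs_def] .
  have dd1: "(d1 has_real_derivative d2 t) (at t within {0..T})" if "t \<in> {0..T}" for t
    using vd_snd[OF xd[OF that, unfolded fx]] unfolding d1_def[abs_def] .
  have cd1: "continuous_on {0..T} d1" using dd1 by (rule DERIV_continuous_on)
  have phi0: "phi 0 = 0" and d10: "d1 0 = \<alpha>" using x0 unfolding phi_def d1_def by auto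
  have restrict: "is_sol p \<alpha> (ereal z) phi d1 d2" if z: "0 < z" "z \<le> T" and lt: "\<And>t. 0 \<le> t \<Longrightarrow> t < z \<Longrightarrow> \<bar>d1 t\<bar> < M" for z
    unfolding is_sol_def
  proof (intro conjI ballI impI)
    show "0 < ereal z" using z by simp
    fix y assume y: "y \<in> Ivl (ereal z)"
    hence yT: "y \<in> {0..T}" and sub: "Ivl (ereal z) \<subseteq> {0..T}" using z unfolding Ivl_ereal by auto
    show "(phi has_real_derivative d1 y) (at y within Ivl (ereal z))"
      using has_field_derivative_subset[OF dphi[OF yT] sub] .
    show "(d1 has_real_derivative d2 y) (at y within Ivl (ereal z))"
      using has_field_derivative_subset[OF dd1[OF yT] sub] .
    assume "0 < y"
    have "min \<bar>d1 y\<bar> M = \<bar>d1 y\<bar>" using lt[of y] y unfolding Ivl_ereal by auto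
    thus "d2 y = y / 2 * d1 y - gam p * phi y - \<bar>d1 y\<bar> powr p" unfolding d2_def g_def by simp
  qed (use phi0 d10 in auto)
  have allM: "M - \<bar>d1 t\<bar> > 0" if tT: "t \<in> {0..T}" for t
  proof (rule first_zero[of 0 "{0..T}" "\<lambda>t. M - \<bar>d1 t\<bar>"])
    show "t \<in> {0..T}" by (rule tT)
    show "(0::real) \<in> {0..T}" using T by simp
    show "\<And>y. y \<in> {0..T} \<Longrightarrow> 0 \<le> y" by simp
    show "\<And>y t. y \<in> {0..T} \<Longrightarrow> 0 \<le> t \<Longrightarrow> t \<le> y \<Longrightarrow> t \<in> {0..T}" by simp
    show "continuous_on {0..T} (\<lambda>t. M - \<bar>d1 t\<bar>)"
      by (intro continuous_intros cd1)
    have "1 \<le> exp ((1 + T / 2 + \<bar>g\<bar>) * T)" using T by simp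
    hence "\<alpha> \<le> \<alpha> * exp ((1 + T / 2 + \<bar>g\<bar>) * T)" using a by simp
    moreover have "\<bar>d1 0\<bar> = \<alpha>" using d10 a by simp
    ultimately show "0 < M - \<bar>d1 0\<bar>" unfolding M_def by linarith
  next
    fix z assume z': "z \<in> {0..T}" "0 < z" "M - \<bar>d1 z\<bar> = 0" and before': "\<And>t. 0 \<le> t \<Longrightarrow> t < z \<Longrightarrow> M - \<bar>d1 t\<bar> > 0"
    have z: "0 \<le> z \<and> z \<le> T" "0 < z" "M = \<bar>d1 z\<bar>" using z' by auto
    have before: "\<And>t. 0 \<le> t \<Longrightarrow> t < z \<Longrightarrow> \<bar>d1 t\<bar> < M" using before' by simp
    have sol: "is_sol p \<alpha> (ereal z) phi d1 d2" using restrict[of z] z before by auto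
    have bd: "\<bar>d1 t\<bar> \<le> M - 1" if t: "0 \<le> t" "t < z" for t
    proof -
      have tR: "t \<in> Ivl (ereal z)" unfolding Ivl_ereal using t by simp
      have "d1 t \<le> \<alpha> * exp ((1 + T / 2 + \<bar>gam p\<bar>) * T)"
        using d1_bound[OF p sol a small tR] t z by simp
      moreover have "d1 t > 0" using d1_pos[OF p sol a small tR] .
      ultimately show ?thesis unfolding M_def g_def by simp
    qed
    obtain \<delta> where \<delta>: "\<delta> > 0" "\<And>t. t \<in> {0..T} \<Longrightarrow> dist t z < \<delta> \<Longrightarrow> dist (d1 t) (d1 z) < 1/2"
      using cd1 z unfolding continuous_on_iff by (metis atLeastAtMost_iff half_gt_zero zero_less_one)
    obtain m where m: "m > 0" "m \<le> \<delta>" "m \<le> z" using \<delta> z by (intro that[of "min \<delta> z"]) auto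
    define t where "t = z - m / 2"
    have t: "0 \<le> t" "t < z" "t \<in> {0..T}" "dist t z < \<delta>" unfolding t_def using m z by (auto simp: dist_real_def)
    have "\<bar>d1 t - d1 z\<bar> < 1/2" using \<delta>(2)[OF t(3,4)] by (simp add: dist_real_def)
    thus False using bd[OF t(1,2)] z by arith
  qed
  have "is_sol p \<alpha> (ereal T) phi d1 d2"
  proof (rule restrict[OF T order.refl])
    fix t :: real assume "0 \<le> t" "t < T"
    thus "\<bar>d1 t\<bar> < M" using allM[of t] by simp
  qed
  thus ?thesis by blast
qed



lemma exists_global:
  assumes p: "p > 1" and a: "0 < \<alpha>" and small: "\<alpha> powr (p - 1) < b0 p"
  shows "\<exists>phi d1 d2. is_sol p \<alpha> \<infinity> phi d1 d2"
proof -
  have "\<forall>n::nat. \<exists>t. is_sol p \<alpha> (ereal (real n + 1)) (fst t) (fst (snd t)) (snd (snd t))"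
  proof
    fix n :: nat
    obtain phi d1 d2 where "is_sol p \<alpha> (ereal (real n + 1)) phi d1 d2"
      using exists_T[OF p a small, of "real n + 1"] by auto
    thus "\<exists>t. is_sol p \<alpha> (ereal (real n + 1)) (fst t) (fst (snd t)) (snd (snd t))"
      by (intro exI[of _ "(phi, d1, d2)"]) simp
  qed
  then obtain F where F: "\<And>n. is_sol p \<alpha> (ereal (real n + 1)) (fst (F n)) (fst (snd (F n))) (snd (snd (F n)))"
    by metis
  define Phi where "Phi n = fst (F n)" for n
  define Psi where "Psi n = fst (snd (F n))" for n
  define Dd where "Dd n = snd (snd (F n))" for n
  have sF: "is_sol p \<alpha> (ereal (real n + 1)) (Phi n) (Psi n) (Dd n)" for n
    unfolding Phi_def Psi_def Dd_def using F .
  define N where "N y = nat \<lceil>y\<rceil>" for y :: real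
  have Ny: "y < real (N y) + 1" if "0 \<le> y" for y
    unfolding N_def using that by linarith
  have inN: "t \<in> Ivl (ereal (real n + 1)) \<longleftrightarrow> 0 \<le> t \<and> t < real n + 1" for t n
    by (simp add: Ivl_ereal)
  have agree: "Phi n t = Phi m t \<and> Psi n t = Psi m t"
    if "0 \<le> t" "t < real n + 1" "t < real m + 1" for n m t
    using sol_unique[OF p sF[of n] sF[of m]] that inN by blast
  define phi where "phi y = Phi (N y) y" for y
  define d1 where "d1 y = Psi (N y) y" for y
  define d2 where "d2 y = Dd (N y) y" for y
  have loc: "phi x = Phi n x \<and> d1 x = Psi n x" if "0 \<le> x" "x < real n + 1" for x n
    unfolding phi_def d1_def using agree[of x "N x" n] Ny[of x] that by simp
  have "is_sol p \<alpha> \<infinity> phi d1 d2"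
    unfolding is_sol_def
  proof (intro conjI ballI impI)
    show "0 < (\<infinity>::ereal)" by simp
    fix y assume yI: "y \<in> Ivl \<infinity>"
    hence y0: "0 \<le> y" by (simp add: Ivl_inf)
    define n where "n = N y"
    define r where "r = real n + 1"
    have yr: "y < r" unfolding r_def n_def using Ny[OF y0] .
    have atw: "at y within Ivl (ereal r) = at y within Ivl \<infinity>"
      by (rule at_within_nhd[of _ "{..<r}"]) (use yr in \<open>auto simp: Ivl_ereal Ivl_inf\<close>)
    have yR: "y \<in> Ivl (ereal r)" using y0 yr by (simp add: Ivl_ereal)
    have near: "\<And>x. x \<in> Ivl \<infinity> \<Longrightarrow> dist x y < r - y \<Longrightarrow> Phi n x = phi x \<and> Psi n x = d1 x"
    proof -
      fix x assume x: "x \<in> Ivl \<infinity>" "dist x y < r - y"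
      hence "0 \<le> x" "x < real n + 1" unfolding r_def by (auto simp: Ivl_inf dist_real_def)
      thus "Phi n x = phi x \<and> Psi n x = d1 x" using loc by simp
    qed
    have "(Phi n has_real_derivative Psi n y) (at y within Ivl \<infinity>)"
      using sol_dphiw[OF sF[of n], folded r_def, OF yR] atw by simp
    hence "(phi has_real_derivative Psi n y) (at y within Ivl \<infinity>)"
      by (rule has_field_derivative_transform_within[of _ _ _ _ "r - y"]) (use yr yI near in auto)
    thus "(phi has_real_derivative d1 y) (at y within Ivl \<infinity>)"
      using loc[of y n] y0 yr unfolding r_def by simp
    have "(Psi n has_real_derivative Dd n y) (at y within Ivl \<infinity>)"
      using sol_dd1w[OF sF[of n], folded r_def, OF yR] atw by simp
    hence "(d1 has_real_derivative Dd n y) (at y within Ivl \<infinity>)"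
      by (rule has_field_derivative_transform_within[of _ _ _ _ "r - y"]) (use yr yI near in auto)
    thus "(d1 has_real_derivative d2 y) (at y within Ivl \<infinity>)"
      unfolding d2_def n_def by simp
    assume "0 < y"
    have "Dd n y = W p (Phi n) (Psi n) y" using sol_eq[OF sF[of n], folded r_def, OF yR \<open>0 < y\<close>] .
    thus "d2 y = y / 2 * d1 y - gam p * phi y - \<bar>d1 y\<bar> powr p"
      using loc[of y n] y0 yr unfolding d2_def n_def[symmetric] W_def r_def by simp
  next
    have "N 0 = 0" unfolding N_def by simp
    thus "phi 0 = 0" "d1 0 = \<alpha>" unfolding phi_def d1_def using sol_facts(2,3)[OF sF[of 0]] by auto
  qed
  thus ?thesis by blast
qed

theorem proposition7p1:
  fixes p :: real
  assumes "p > 1"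
  shows "\<exists>\<alpha>0>0. \<forall>\<alpha>. 0 < \<alpha> \<and> \<alpha> < \<alpha>0 \<longrightarrow>
           (\<exists>R phi d1 d2. is_max_sol p \<alpha> R phi d1 d2) \<and>
           (\<forall>R phi d1 d2. is_max_sol p \<alpha> R phi d1 d2 \<longrightarrow>
              R = \<infinity> \<and>
              (\<forall>y>0. phi y > 0 \<and> d1 y > 0) \<and>
              (\<exists>Rb>0. (\<forall>y. 0 \<le> y \<and> y < Rb \<longrightarrow> d2 y < 0) \<and> (\<forall>y>Rb. d2 y > 0)))"
proof -
  have p: "p > 1" by fact
  define a0 where "a0 = b0 p powr (1 / (p - 1))"
  have b0: "0 < b0 p" using b0_pos[OF p] .
  have a0: "0 < a0" unfolding a0_def using b0 by simp
  have main: "(\<exists>R phi d1 d2. is_max_sol p \<alpha> R phi d1 d2) \<and>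
           (\<forall>R phi d1 d2. is_max_sol p \<alpha> R phi d1 d2 \<longrightarrow>
              R = \<infinity> \<and>
              (\<forall>y>0. phi y > 0 \<and> d1 y > 0) \<and>
              (\<exists>Rb>0. (\<forall>y. 0 \<le> y \<and> y < Rb \<longrightarrow> d2 y < 0) \<and> (\<forall>y>Rb. d2 y > 0)))"
    if aa: "0 < \<alpha> \<and> \<alpha> < a0" for \<alpha>
  proof -
    have a: "0 < \<alpha>" using aa by simp
    have small: "\<alpha> powr (p - 1) < b0 p"
    proof -
      have "\<alpha> powr (p - 1) < a0 powr (p - 1)" using aa p by (intro powr_less_mono2) auto
      also have "a0 powr (p - 1) = b0 p" unfolding a0_def using p b0 by (simp add: powr_powr)
      finally show ?thesis .
    qed
    obtain psi e1 e2 where gl: "is_sol p \<alpha> \<infinity> psi e1 e2" using exists_global[OF p a small] by blast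
    have ex: "\<exists>R phi d1 d2. is_max_sol p \<alpha> R phi d1 d2"
      using gl unfolding is_max_sol_def by (intro exI[of _ \<infinity>] exI[of _ psi] exI[of _ e1] exI[of _ e2]) simp
    have all: "R = \<infinity> \<and> (\<forall>y>0. phi y > 0 \<and> d1 y > 0) \<and>
              (\<exists>Rb>0. (\<forall>y. 0 \<le> y \<and> y < Rb \<longrightarrow> d2 y < 0) \<and> (\<forall>y>Rb. d2 y > 0))"
      if ms: "is_max_sol p \<alpha> R phi d1 d2" for R phi d1 d2
    proof -
      have sol: "is_sol p \<alpha> R phi d1 d2" using ms unfolding is_max_sol_def by simp
      have Rinf: "R = \<infinity>"
      proof (rule ccontr)
        assume "R \<noteq> \<infinity>"
        hence "R < \<infinity>" by (simp add: less_top)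
        moreover have "\<forall>y\<in>Ivl R. psi y = phi y"
        proof
          fix y assume yR: "y \<in> Ivl R"
          have "y \<in> Ivl \<infinity>" using Ivl_nonneg[OF yR] by (simp add: Ivl_inf)
          thus "psi y = phi y" using sol_unique[OF p gl sol] yR by blast
        qed
        ultimately show False using ms gl unfolding is_max_sol_def by blast
      qed
      have solI: "is_sol p \<alpha> \<infinity> phi d1 d2" using sol Rinf by simp
      have pos: "\<forall>y>0. phi y > 0 \<and> d1 y > 0"
      proof (intro allI impI conjI)
        fix y :: real assume "y > 0"
        hence yI: "y \<in> Ivl \<infinity>" by (simp add: Ivl_inf)
        show "phi y > 0" using phi_pos[OF p solI a small yI \<open>y > 0\<close>] .
        show "d1 y > 0" using d1_pos[OF p solI a small yI] .
      qed
      have YI: "K0 p * \<alpha> powr (p - 1) \<in> Ivl \<infinity>" using K0_pos[OF p] by (simp add: Ivl_inf)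
      obtain Rb where Rb: "Rb > 0" "\<forall>y. 0 \<le> y \<and> y < Rb \<longrightarrow> d2 y < 0" "\<forall>y\<in>Ivl \<infinity>. Rb < y \<longrightarrow> d2 y > 0"
        using sign_structure[OF p solI a small YI] by blast
      have "\<forall>y>Rb. d2 y > 0" using Rb by (simp add: Ivl_inf)
      thus ?thesis using Rinf pos Rb by blast
    qed
    show ?thesis using ex all by blast
  qed
  show ?thesis using a0 main by blast
qed


end
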